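(* Let $d\ge2$, let $(c_t)_{t\ge0}\subset\mathbb{S}^d$ be an arbitrary sequence of unit vectors, and let $\omega:\mathrm{P}^d_+\to\mathbb{R}_{\ge0}$ satisfy $\omega(X)\le C\sqrt{\lambda_{\max}(X)}$ for all $X\in\mathrm{P}^d_+$, for some constant $C>0$. Let $$\lambda_0\ge\max\Big\{2,\ \sqrt{\tfrac{2}{3(d-1)}}\,2dC+\tfrac{2}{3(d-1)}\Big\},$$ and define $V_0=\lambda_0 I_{d\times d}$ and $V_{t+1}=V_t+\omega(V_t)\sum_{i=1}^{d-1}P_{t,i}$, where $$P_{t,i}=a^+_{t+1,i}(a^+_{t+1,i})^{\mathsf T}+a^-_{t+1,i}(a^-_{t+1,i})^{\mathsf T},\quad a^\pm_{t+1,i}=\frac{\tilde a^\pm_{t+1,i}}{\|\tilde a^\pm_{t+1,i}\|_2},\quad \tilde a^\pm_{t+1,i}=c_t\pm\frac{1}{\sqrt{\lambda_{t,1}}}v_{t,i},$$ with $\lambda_{t,1}\le\dots\le\lambda_{t,d}$ the eigenvalues of $V_t$ and $v_{t,1},\dots,v_{t,d}$ corresponding orthonormal eigenvectors (for any choice of such eigenvectors). Then $$\lambda_{\min}(V_t)\ge\sqrt{\tfrac{2}{3(d-1)}\lambda_{\max}(V_t)}\quad\text{for all }t\ge0.$$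
   Context: $\mathbb{S}^d=\{x\in\mathbb{R}^d:\|x\|_2=1\}$; $\mathrm{P}^d_+$ is the set of real symmetric positive semidefinite $d\times d$ matrices; $\lambda_{\min},\lambda_{\max}$ denote smallest and largest eigenvalues. *)

theory Defs
  imports "HOL-Analysis.Analysis"
begin

definition psd :: "real^'n^'n \<Rightarrow> bool" where
  "psd A \<longleftrightarrow> transpose A = A \<and> (\<forall>x. 0 \<le> x \<bullet> (A *v x))"

definition eigvals :: "real^'n^'n \<Rightarrow> real set" where
  "eigvals A = {\<mu>. \<exists>x. x \<noteq> 0 \<and> A *v x = \<mu> *\<^sub>R x}"

definition lambda_min :: "real^'n^'n \<Rightarrow> real" where
  "lambda_min A = Inf (eigvals A)"

definition lambda_max :: "real^'n^'n \<Rightarrow> real" where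
  "lambda_max A = Sup (eigvals A)"

definition outer :: "real^'n \<Rightarrow> real^'n \<Rightarrow> real^'n^'n" where
  "outer a b = (\<chi> i j. a $ i * b $ j)"

definition sorted_eigensystem ::
  "real^'n^'n \<Rightarrow> (nat \<Rightarrow> real) \<Rightarrow> (nat \<Rightarrow> real^'n) \<Rightarrow> bool" where
  "sorted_eigensystem A lam v \<longleftrightarrow>
     (\<forall>i\<in>{1..CARD('n)}. \<forall>j\<in>{1..CARD('n)}. v i \<bullet> v j = (if i = j then 1 else 0)) \<and>
     (\<forall>i\<in>{1..CARD('n)}. A *v v i = lam i *\<^sub>R v i) \<and>
     (\<forall>i j. 1 \<le> i \<longrightarrow> i \<le> j \<longrightarrow> j \<le> CARD('n) \<longrightarrow> lam i \<le> lam j)"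

definition Pmat :: "real^'n \<Rightarrow> real \<Rightarrow> real^'n \<Rightarrow> real^'n^'n" where
  "Pmat c l1 w =
     (let ap = c + (1 / sqrt l1) *\<^sub>R w; am = c - (1 / sqrt l1) *\<^sub>R w;
          bp = (1 / norm ap) *\<^sub>R ap; bm = (1 / norm am) *\<^sub>R am
      in outer bp bp + outer bm bm)"

end

theory Submission imports Defs begin

lemma es_expand:
  fixes A :: "real^'n^'n"
  assumes es: "sorted_eigensystem A l w"
  shows "x = (\<Sum>i=1..CARD('n). (w i \<bullet> x) *\<^sub>R w i)"
proof -
  let ?d = "CARD('n)"
  have on: "\<And>i j. i \<in> {1..?d} \<Longrightarrow> j \<in> {1..?d} \<Longrightarrow> w i \<bullet> w j = (if i = j then 1 else 0)"
    using es unfolding sorted_eigensystem_def by blast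
  let ?W = "w ` {1..?d}"
  have inj: "inj_on w {1..?d}"
  proof (rule inj_onI)
    fix i j assume "i \<in> {1..?d}" "j \<in> {1..?d}" "w i = w j"
    then show "i = j" using on[of i j] on[of i i] by (metis zero_neq_one)
  qed
  have card: "card ?W = ?d" using inj by (simp add: card_image)
  have z: "0 \<notin> ?W" using on by fastforce
  have po: "pairwise orthogonal ?W"
    unfolding pairwise_def orthogonal_def using on by (auto)
  have ind: "independent ?W" using pairwise_orthogonal_independent[OF po z] .
  have sp: "UNIV \<subseteq> span ?W"
    using card_eq_dim[of ?W UNIV] ind card by simp
  define y where "y = x - (\<Sum>i=1..?d. (w i \<bullet> x) *\<^sub>R w i)"
  have orth: "orthogonal y u" if "u \<in> ?W" for u
  proof -
    obtain j where j: "j \<in> {1..?d}" "u = w j" using \<open>u \<in> ?W\<close> by blast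
    have "(\<Sum>i=1..?d. (w i \<bullet> x) *\<^sub>R w i) \<bullet> w j = (\<Sum>i=1..?d. (w i \<bullet> x) * (w i \<bullet> w j))"
      by (simp add: inner_sum_left)
    also have "\<dots> = (\<Sum>i=1..?d. if i = j then (w i \<bullet> x) else 0)"
      by (rule sum.cong) (use on j in auto)
    also have "\<dots> = w j \<bullet> x" using j by simp
    finally have calc: "(\<Sum>i=1..?d. (w i \<bullet> x) *\<^sub>R w i) \<bullet> w j = w j \<bullet> x" .
    show ?thesis unfolding y_def orthogonal_def j inner_diff_left calc
      by (simp add: inner_commute)
  qed
  have "orthogonal y y" using orthogonal_to_span[of y ?W y] orth sp by auto
  then show ?thesis unfolding y_def orthogonal_self by simp
qed

lemma es_on: "sorted_eigensystem A l w \<Longrightarrow> i \<in> {1..CARD('n)} \<Longrightarrow> j \<in> {1..CARD('n)}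
   \<Longrightarrow> w i \<bullet> w j = (if i = j then 1 else 0)" for A :: "real^'n^'n"
  unfolding sorted_eigensystem_def by blast
lemma es_ev: "sorted_eigensystem A l w \<Longrightarrow> i \<in> {1..CARD('n)} \<Longrightarrow> A *v w i = l i *\<^sub>R w i"
  for A :: "real^'n^'n"
  unfolding sorted_eigensystem_def by blast
lemma es_mono: "sorted_eigensystem A l w \<Longrightarrow> 1 \<le> i \<Longrightarrow> i \<le> j \<Longrightarrow> j \<le> CARD('n) \<Longrightarrow> l i \<le> l j"
  for A :: "real^'n^'n"
  unfolding sorted_eigensystem_def by blast

lemma es_quad:
  fixes A :: "real^'n^'n"
  assumes es: "sorted_eigensystem A l w"
  shows "y \<bullet> (A *v x) = (\<Sum>i=1..CARD('n). l i * (w i \<bullet> x) * (w i \<bullet> y))"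
proof -
  have "A *v x = A *v (\<Sum>i=1..CARD('n). (w i \<bullet> x) *\<^sub>R w i)"
    using es_expand[OF es, of x] by simp
  also have "\<dots> = (\<Sum>i=1..CARD('n). (w i \<bullet> x) *\<^sub>R (A *v w i))"
    by (simp add: linear_sum[OF matrix_vector_mul_linear] matrix_vector_mult_scaleR)
  also have "\<dots> = (\<Sum>i=1..CARD('n). (w i \<bullet> x) *\<^sub>R (l i *\<^sub>R w i))"
    by (rule sum.cong) (use es_ev[OF es] in auto)
  finally have "y \<bullet> (A *v x) = (\<Sum>i=1..CARD('n). y \<bullet> ((w i \<bullet> x) *\<^sub>R (l i *\<^sub>R w i)))"
    by (simp add: inner_sum_right)
  also have "\<dots> = (\<Sum>i=1..CARD('n). l i * (w i \<bullet> x) * (w i \<bullet> y))"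
  proof (rule sum.cong)
    fix i
    have "y \<bullet> ((w i \<bullet> x) *\<^sub>R (l i *\<^sub>R w i)) = (w i \<bullet> x) * (l i * (y \<bullet> w i))"
      by simp
    also have "\<dots> = l i * (w i \<bullet> x) * (w i \<bullet> y)" by (simp add: inner_commute[of y])
    finally show "y \<bullet> ((w i \<bullet> x) *\<^sub>R (l i *\<^sub>R w i)) = l i * (w i \<bullet> x) * (w i \<bullet> y)" .
  qed simp
  finally show ?thesis .
qed

lemma es_normsq:
  fixes A :: "real^'n^'n"
  assumes es: "sorted_eigensystem A l w"
  shows "x \<bullet> x = (\<Sum>i=1..CARD('n). (w i \<bullet> x)^2)"
proof -
  have "x \<bullet> x = x \<bullet> (\<Sum>i=1..CARD('n). (w i \<bullet> x) *\<^sub>R w i)"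
    using es_expand[OF es, of x] by simp
  then show ?thesis by (simp add: inner_sum_right power2_eq_square inner_commute)
qed

lemma es_bounds:
  fixes A :: "real^'n^'n"
  assumes es: "sorted_eigensystem A l w"
  shows "l 1 * (x \<bullet> x) \<le> x \<bullet> (A *v x)" "x \<bullet> (A *v x) \<le> l CARD('n) * (x \<bullet> x)"
proof -
  have q: "x \<bullet> (A *v x) = (\<Sum>i=1..CARD('n). l i * (w i \<bullet> x)^2)"
    unfolding es_quad[OF es] by (simp add: power2_eq_square mult.assoc)
  have n: "x \<bullet> x = (\<Sum>i=1..CARD('n). (w i \<bullet> x)^2)" by (rule es_normsq[OF es])
  show "l 1 * (x \<bullet> x) \<le> x \<bullet> (A *v x)"
    unfolding q n sum_distrib_left
    by (rule sum_mono) (auto intro!: mult_right_mono es_mono[OF es])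
  show "x \<bullet> (A *v x) \<le> l CARD('n) * (x \<bullet> x)"
    unfolding q n sum_distrib_left
    by (rule sum_mono) (auto intro!: mult_right_mono es_mono[OF es])
qed

lemma es_lmin:
  fixes A :: "real^'n^'n"
  assumes es: "sorted_eigensystem A l w"
  shows "lambda_min A = l 1"
proof -
  have 1: "1 \<in> {1..CARD('n)}" by simp
  have "w 1 \<bullet> w 1 = 1" using es_on[OF es 1 1] by simp
  then have w1: "w 1 \<noteq> 0" by auto
  have "l 1 \<in> eigvals A" unfolding eigvals_def mem_Collect_eq
    by (rule exI[of _ "w 1"]) (use w1 es_ev[OF es 1] in simp)
  moreover have "l 1 \<le> \<mu>" if mu: "\<mu> \<in> eigvals A" for \<mu>
  proof -
    obtain x where x: "x \<noteq> 0" "A *v x = \<mu> *\<^sub>R x" using mu unfolding eigvals_def mem_Collect_eq by blast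
    have "l 1 * (x \<bullet> x) \<le> \<mu> * (x \<bullet> x)" using es_bounds(1)[OF es, of x] x by simp
    moreover have "x \<bullet> x > 0" using x by simp
    ultimately show ?thesis using mult_le_cancel_right_pos by blast
  qed
  ultimately show ?thesis unfolding lambda_min_def by (rule cInf_eq_minimum; blast)
qed

lemma es_lmax:
  fixes A :: "real^'n^'n"
  assumes es: "sorted_eigensystem A l w"
  shows "lambda_max A = l CARD('n)"
proof -
  have 1: "CARD('n) \<in> {1..CARD('n)}" by simp
  have "w CARD('n) \<bullet> w CARD('n) = 1" using es_on[OF es 1 1] by simp
  then have w1: "w CARD('n) \<noteq> 0" by auto
  have "l CARD('n) \<in> eigvals A" unfolding eigvals_def mem_Collect_eq
    by (rule exI[of _ "w CARD('n)"]) (use w1 es_ev[OF es 1] in simp)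
  moreover have "\<mu> \<le> l CARD('n)" if mu: "\<mu> \<in> eigvals A" for \<mu>
  proof -
    obtain x where x: "x \<noteq> 0" "A *v x = \<mu> *\<^sub>R x" using mu unfolding eigvals_def mem_Collect_eq by blast
    have "\<mu> * (x \<bullet> x) \<le> l CARD('n) * (x \<bullet> x)" using es_bounds(2)[OF es, of x] x by simp
    moreover have "x \<bullet> x > 0" using x by simp
    ultimately show ?thesis using mult_le_cancel_right_pos by blast
  qed
  ultimately show ?thesis unfolding lambda_max_def by (rule cSup_eq_maximum; blast)
qed

lemma es_psd:
  fixes A :: "real^'n^'n"
  assumes es: "sorted_eigensystem A l w" and l1: "l 1 \<ge> 0"
  shows "psd A"
proof -
  have sym: "y \<bullet> (A *v x) = x \<bullet> (A *v y)" for x y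
    unfolding es_quad[OF es] by (rule sum.cong) simp_all
  have "transpose A = A"
  proof -
    have "transpose A $ i $ j = A $ i $ j" for i j
    proof -
      have ax: "axis k (1::real) \<bullet> z = z $ k" for k and z :: "real^'n"
        by (simp add: cart_eq_inner_axis inner_commute)
      have mv: "(A *v axis k 1) $ m = A $ m $ k" for k m
        unfolding matrix_vector_mul_component by (subst inner_commute) (rule ax)
      have "A $ j $ i = axis j 1 \<bullet> (A *v axis i 1)"
        by (simp only: ax mv)
      also have "\<dots> = axis i 1 \<bullet> (A *v axis j 1)" by (rule sym)
      also have "\<dots> = A $ i $ j"
        by (simp only: ax mv)
      finally show ?thesis by (simp add: transpose_def)
    qed
    then show ?thesis by (simp add: vec_eq_iff)
  qed
  moreover have "0 \<le> x \<bullet> (A *v x)" for x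
  proof -
    have "0 \<le> l 1 * (x \<bullet> x)" using l1 by simp
    then show ?thesis using es_bounds(1)[OF es, of x] by linarith
  qed
  ultimately show ?thesis unfolding psd_def by blast
qed

lemma mv_scaleR: "((c::real) *\<^sub>R A) *v x = c *\<^sub>R (A *v (x::real^'n))" for A :: "real^'n^'m"
  by (simp add: vec_eq_iff matrix_vector_mult_def sum_distrib_left mult.assoc)

lemma mv_sum: "(\<Sum>i\<in>S. f i) *v (x::real^'n) = (\<Sum>i\<in>S. f i *v x)" for f :: "'b \<Rightarrow> real^'n^'m"
proof (induction S rule: infinite_finite_induct)
  case (infinite A) then show ?case by (simp add: vec_eq_iff matrix_vector_mult_def)
next
  case empty then show ?case by (simp add: vec_eq_iff matrix_vector_mult_def)
next
  case (insert a A) then show ?case by (simp add: matrix_vector_mult_add_rdistrib)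
qed

lemma outer_mv: "outer b b *v x = (b \<bullet> x) *\<^sub>R b" for b x :: "real^'n"
  by (simp add: vec_eq_iff outer_def matrix_vector_mult_def inner_vec_def sum_distrib_left
      mult.commute mult.left_commute)

lemma outer_quad: "x \<bullet> (outer b b *v x) = (b \<bullet> x)^2" for b x :: "real^'n"
  by (simp add: outer_mv power2_eq_square inner_commute)

lemma normalized_lower:
  fixes a x :: "real^'n"
  assumes N: "norm a \<le> N"
  shows "(a \<bullet> x)^2 / N^2 \<le> (((1 / norm a) *\<^sub>R a) \<bullet> x)^2"
proof (cases "a = 0")
  case True then show ?thesis by simp
next
  case False
  then have na: "norm a > 0" by simp
  have "((1 / norm a) *\<^sub>R a \<bullet> x)^2 = (a \<bullet> x)^2 / (norm a)^2"
    by (simp add: power_divide)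
  moreover have "(a \<bullet> x)^2 / N^2 \<le> (a \<bullet> x)^2 / (norm a)^2"
  proof (rule divide_left_mono)
    have Np: "N > 0" using na N by linarith
    show "(norm a)^2 \<le> N^2" using na N by (auto intro: power_mono)
    show "0 \<le> (a \<bullet> x)^2" by simp
    show "0 < N^2 * (norm a)^2" using na Np by simp
  qed
  ultimately show ?thesis by simp
qed

lemma normalized_upper:
  fixes a x :: "real^'n"
  shows "(((1 / norm a) *\<^sub>R a) \<bullet> x)^2 \<le> x \<bullet> x"
proof -
  let ?b = "(1 / norm a) *\<^sub>R a"
  have nb: "norm ?b \<le> 1" by (cases "a = 0") simp_all
  have "\<bar>?b \<bullet> x\<bar> \<le> norm ?b * norm x" by (rule Cauchy_Schwarz_ineq2)
  also have "\<dots> \<le> norm x" using nb by (simp add: mult_left_le_one_le)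
  finally have "(?b \<bullet> x)^2 \<le> (norm x)^2"
    by (metis abs_ge_zero power2_abs power_mono)
  then show ?thesis by (simp add: power2_norm_eq_inner)
qed

lemma Pmat_quad: "x \<bullet> (Pmat c l1 w *v x) =
   (((1 / norm (c + (1 / sqrt l1) *\<^sub>R w)) *\<^sub>R (c + (1 / sqrt l1) *\<^sub>R w)) \<bullet> x)^2
 + (((1 / norm (c - (1 / sqrt l1) *\<^sub>R w)) *\<^sub>R (c - (1 / sqrt l1) *\<^sub>R w)) \<bullet> x)^2"
  for c w x :: "real^'n"
  unfolding Pmat_def Let_def matrix_vector_mult_add_rdistrib inner_add_right outer_quad ..

lemma Pmat_upper: "x \<bullet> (Pmat c l1 w *v x) \<le> 2 * (x \<bullet> x)" for c w x :: "real^'n"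
  unfolding Pmat_quad using normalized_upper[of _ x] by (smt (verit))

lemma Pmat_lower:
  fixes c w x :: "real^'n"
  assumes c: "norm c = 1" and w: "norm w = 1" and l: "l1 > 0"
  shows "2 * (w \<bullet> x)^2 / (sqrt l1 + 1)^2 \<le> x \<bullet> (Pmat c l1 w *v x)"
proof -
  define s where "s = 1 / sqrt l1"
  have s0: "s > 0" using l by (simp add: s_def)
  define N where "N = 1 + s"
  have Np: "N > 0" using s0 by (simp add: N_def)
  have n1: "norm (c + s *\<^sub>R w) \<le> N"
    using norm_triangle_ineq[of c "s *\<^sub>R w"] c w s0 by (simp add: N_def)
  have n2: "norm (c - s *\<^sub>R w) \<le> N"
    using norm_triangle_ineq4[of c "s *\<^sub>R w"] c w s0 by (simp add: N_def)
  have "2 * (s * (w \<bullet> x))^2 / N^2 \<le> ((c + s *\<^sub>R w) \<bullet> x)^2 / N^2 + ((c - s *\<^sub>R w) \<bullet> x)^2 / N^2"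
  proof -
    have "2 * (s * (w \<bullet> x))^2 \<le> ((c + s *\<^sub>R w) \<bullet> x)^2 + ((c - s *\<^sub>R w) \<bullet> x)^2"
      by (simp add: inner_add_left inner_diff_left power2_eq_square algebra_simps)
    then show ?thesis using Np by (simp add: add_divide_distrib[symmetric] divide_right_mono)
  qed
  also have "\<dots> \<le> x \<bullet> (Pmat c l1 w *v x)"
    unfolding Pmat_quad s_def[symmetric]
    using normalized_lower[OF n1, of x] normalized_lower[OF n2, of x] by linarith
  finally have *: "2 * (s * (w \<bullet> x))^2 / N^2 \<le> x \<bullet> (Pmat c l1 w *v x)" .
  have "2 * (s * (w \<bullet> x))^2 / N^2 = 2 * (w \<bullet> x)^2 / (sqrt l1 + 1)^2"
  proof -
    have sq: "sqrt l1 > 0" using l by simp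
    have "s / N = 1 / (sqrt l1 + 1)" unfolding N_def s_def using sq by (simp add: field_simps)
    then have "(s / N)^2 = 1 / (sqrt l1 + 1)^2" by (simp add: power_divide)
    moreover have "2 * (s * (w \<bullet> x))^2 / N^2 = 2 * (w \<bullet> x)^2 * (s / N)^2"
      by (simp add: power_mult_distrib power_divide)
    ultimately show ?thesis by simp
  qed
  with * show ?thesis by simp
qed

lemma arith_step:
  fixes a b a' b' om C k d lam0 :: real
  assumes a0: "a \<ge> lam0" and l2: "lam0 \<ge> 2" and ba: "b \<ge> a" and ak: "a^2 \<ge> k * b"
    and om0: "0 \<le> om" and omC: "om \<le> C * sqrt b" and Cp: "C > 0" and kp: "k > 0"
    and kd: "k * (d - 1) = 2/3" and d2: "d \<ge> 2"
    and lb: "lam0 \<ge> sqrt k * 2 * d * C + k"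
    and a': "a' \<ge> min (a + 2 * om / (sqrt a + 1)^2) b"
    and b': "b' \<le> b + 2 * (d - 1) * om"
  shows "a' \<ge> lam0 \<and> a'^2 \<ge> k * b'"
proof -
  define \<delta> where "\<delta> = 2 * om / (sqrt a + 1)^2"
  define m where "m = min (a + \<delta>) b"
  have d0: "\<delta> \<ge> 0" unfolding \<delta>_def using om0 by simp
  have ma: "m \<ge> a" unfolding m_def using d0 ba by simp
  have a'm: "a' \<ge> m" using a' unfolding m_def \<delta>_def .
  have m0: "m \<ge> 0" using ma a0 l2 by linarith
  have kb': "k * b' \<le> k * b + 4/3 * om"
  proof -
    have "k * b' \<le> k * (b + 2 * (d - 1) * om)" using b' kp by simp
    also have "\<dots> = k * b + 2 * (k * (d - 1)) * om" by (simp add: algebra_simps)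
    finally show ?thesis using kd by simp
  qed
  have key: "m^2 \<ge> k * b + 4/3 * om"
  proof (cases "a + \<delta> \<le> b")
    case True
    then have mm: "m = a + \<delta>" unfolding m_def by simp
    define sa where "sa = sqrt a"
    have a_pos: "a \<ge> 2" using a0 l2 by linarith
    have "0 \<le> a" using a_pos by linarith
    then have sa2: "sa^2 = a" unfolding sa_def by (rule real_sqrt_pow2)
    have sa0: "sa \<ge> 0" unfolding sa_def using \<open>0 \<le> a\<close> by simp
    have sa14: "sa \<ge> 1.4"
    proof (rule ccontr)
      assume "\<not> sa \<ge> 1.4"
      then have "sa^2 < 1.4^2" using sa0 by (intro power_strict_mono) auto
      then show False using sa2 a_pos by (simp add: power2_eq_square)
    qed
    have q: "3 * a \<ge> (sa + 1)^2"
    proof -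
      have "3 * a - (sa + 1)^2 = 2 * sa * (sa - 1) - 1" using sa2 by (simp add: power2_eq_square algebra_simps)
      moreover have "2 * sa * (sa - 1) \<ge> 2 * 1.4 * 0.4"
        using sa14 by (intro mult_mono) auto
      ultimately show ?thesis by simp
    qed
    have pos: "(sa + 1)^2 > 0" using sa0 by simp
    have "2 * a * \<delta> = 4 * om * a / (sa + 1)^2" unfolding \<delta>_def sa_def by simp
    also have "\<dots> \<ge> 4 * om * ((sa + 1)^2 / 3) / (sa + 1)^2"
      using q om0 pos by (intro divide_right_mono mult_left_mono) auto
    also have "4 * om * ((sa + 1)^2 / 3) / (sa + 1)^2 = 4/3 * om" using pos by simp
    finally have "2 * a * \<delta> \<ge> 4/3 * om" .
    moreover have "m^2 = a^2 + 2 * a * \<delta> + \<delta>^2" unfolding mm by (simp add: power2_eq_square algebra_simps)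
    moreover have "\<delta>^2 \<ge> 0" by simp
    ultimately show ?thesis using ak by linarith
  next
    case False
    then have mm: "m = b" unfolding m_def by simp
    define sb where "sb = sqrt b"
    define sk where "sk = sqrt k"
    have b2: "b \<ge> 2" using a0 l2 ba by linarith
    have "0 \<le> b" using b2 by linarith
    then have sb2: "sb^2 = b" unfolding sb_def by (rule real_sqrt_pow2)
    have sb0: "sb \<ge> 0" unfolding sb_def using \<open>0 \<le> b\<close> by simp
    have sb1: "sb \<ge> 1"
    proof (rule ccontr)
      assume "\<not> sb \<ge> 1"
      then have "sb^2 < 1^2" using sb0 by (intro power_strict_mono) auto
      then show False using sb2 b2 by simp
    qed
    have sk2: "sk^2 = k" unfolding sk_def using kp by (simp add: real_sqrt_pow2)
    have sk0: "sk \<ge> 0" unfolding sk_def using kp by simp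
    have skd: "sk * 2 * d \<ge> 4/3"
    proof (rule power2_le_imp_le)
      have e: "(sk * 2 * d)^2 = k * 4 * d^2" using sk2 by (simp add: power_mult_distrib)
      have r: "k * 4 * d^2 * (d - 1) = 8/3 * d^2"
      proof -
        have "k * 4 * d^2 * (d - 1) = 4 * d^2 * (k * (d - 1))" by (simp add: algebra_simps)
        then show ?thesis using kd by simp
      qed
      have "(4/3::real)^2 * (d - 1) \<le> 8/3 * d^2"
      proof -
        have "d * d \<ge> 2 * d" using d2 by (intro mult_right_mono) auto
        then have h: "16/9 * d - 16/9 \<le> 8/3 * (d * d)" using d2 by linarith
        have e1: "(4/3::real)^2 * (d - 1) = 16/9 * d - 16/9" by (simp add: power2_eq_square field_simps)
        have e2: "8/3 * d^2 = 8/3 * (d * d)" by (simp add: power2_eq_square)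
        show ?thesis unfolding e1 e2 using h .
      qed
      then have "(4/3::real)^2 * (d - 1) \<le> k * 4 * d^2 * (d - 1)" unfolding r .
      then have "(4/3::real)^2 \<le> k * 4 * d^2" using d2 by (simp add: mult_le_cancel_right)
      then show "(4/3)^2 \<le> (sk * 2 * d)^2" using e by simp
      show "0 \<le> sk * 2 * d" using sk0 d2 by simp
    qed
    have bk: "b - k \<ge> sk * 2 * d * C" using lb a0 ba unfolding sk_def by linarith
    have "4/3 * om \<le> 4/3 * (C * sb)" using omC unfolding sb_def by simp
    also have "\<dots> = sb * C * (1 * (4/3))" by simp
    also have "\<dots> \<le> sb * C * (sb * (sk * 2 * d))"
      using sb1 skd sb0 Cp by (intro mult_left_mono mult_mono) auto
    also have "\<dots> = b * (sk * 2 * d * C)" using sb2 by (simp add: power2_eq_square algebra_simps)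
    also have "\<dots> \<le> b * (b - k)" using bk b2 by (intro mult_left_mono) auto
    also have "\<dots> = b^2 - k * b" by (simp add: power2_eq_square algebra_simps)
    finally have "4/3 * om \<le> b^2 - k * b" .
    then show ?thesis unfolding mm by linarith
  qed
  have "a'^2 \<ge> m^2" using a'm m0 by (intro power_mono) auto
  then have "a'^2 \<ge> k * b'" using key kb' by linarith
  moreover have "a' \<ge> lam0" using a'm ma a0 by linarith
  ultimately show ?thesis by simp
qed

theorem theorem2:
  fixes c :: "nat \<Rightarrow> real^'n"
    and \<omega> :: "real^'n^'n \<Rightarrow> real"
    and C lam0 :: real
    and V :: "nat \<Rightarrow> real^'n^'n"
    and lam :: "nat \<Rightarrow> nat \<Rightarrow> real"
    and v :: "nat \<Rightarrow> nat \<Rightarrow> real^'n"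
  assumes d2: "CARD('n) \<ge> 2"
    and unit: "\<forall>t. norm (c t) = 1"
    and Cpos: "C > 0"
    and omega: "\<forall>X. psd X \<longrightarrow> 0 \<le> \<omega> X \<and> \<omega> X \<le> C * sqrt (lambda_max X)"
    and lam0_2: "lam0 \<ge> 2"
    and lam0_b: "lam0 \<ge> sqrt (2 / (3 * (real CARD('n) - 1))) * 2 * real CARD('n) * C
                          + 2 / (3 * (real CARD('n) - 1))"
    and V0: "V 0 = lam0 *\<^sub>R mat 1"
    and eig: "\<forall>t. sorted_eigensystem (V t) (lam t) (v t)"
    and step: "\<forall>t. V (Suc t) = V t + \<omega> (V t) *\<^sub>R
                      (\<Sum>i = 1..CARD('n) - 1. Pmat (c t) (lam t 1) (v t i))"
  shows "\<forall>t. lambda_min (V t) \<ge> sqrt (2 / (3 * (real CARD('n) - 1)) * lambda_max (V t))"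
proof -
  let ?d = "CARD('n)"
  define k where "k = 2 / (3 * (real ?d - 1))"
  have dr: "real ?d \<ge> 2" using d2 by simp
  have kp: "k > 0" unfolding k_def using dr by simp
  have kd: "k * (real ?d - 1) = 2/3" unfolding k_def using dr by (simp add: field_simps)
  have lb: "lam0 \<ge> sqrt k * 2 * real ?d * C + k" using lam0_b unfolding k_def .
  have d1: "1 \<le> ?d" using d2 by simp
  have inv: "lam t 1 \<ge> lam0 \<and> (lam t 1)^2 \<ge> k * lam t ?d" for t
  proof (induction t)
    case 0
    have es: "sorted_eigensystem (V 0) (lam 0) (v 0)" using eig by blast
    have l0: "lam 0 i = lam0" if i: "i \<in> {1..?d}" for i
    proof -
      have "V 0 *v v 0 i = lam0 *\<^sub>R v 0 i" unfolding V0 by (simp add: mv_scaleR)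
      then have "lam0 *\<^sub>R v 0 i = lam 0 i *\<^sub>R v 0 i" using es_ev[OF es i] by metis
      moreover have "v 0 i \<noteq> 0" using es_on[OF es i i] by auto
      ultimately show ?thesis by simp
    qed
    have e1: "lam 0 1 = lam0" using l0 d1 by auto
    have e2: "lam 0 ?d = lam0" using l0 d1 by auto
    have "k \<le> k * (real ?d - 1)" using kp dr by (simp add: mult_le_cancel_left1)
    then have klam: "k \<le> lam0" using kd lam0_2 by linarith
    have "k * lam0 \<le> lam0 * lam0" using klam lam0_2 by (intro mult_right_mono) auto
    then show ?case unfolding e1 e2 by (simp add: power2_eq_square)
  next
    case (Suc t)
    have es: "sorted_eigensystem (V t) (lam t) (v t)" using eig by blast
    have es': "sorted_eigensystem (V (Suc t)) (lam (Suc t)) (v (Suc t))" using eig by blast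
    define a where "a = lam t 1"
    define b where "b = lam t ?d"
    define om where "om = \<omega> (V t)"
    have a0: "a \<ge> lam0" and ak: "a^2 \<ge> k * b" using Suc.IH unfolding a_def b_def by auto
    have ba: "b \<ge> a" unfolding a_def b_def using es_mono[OF es, of 1 ?d] d1 by simp
    have apos: "a > 0" using a0 lam0_2 by linarith
    have psd: "psd (V t)" using es_psd[OF es] a0 lam0_2 unfolding a_def by linarith
    have om0: "0 \<le> om" and omC: "om \<le> C * sqrt b"
      using omega psd es_lmax[OF es] unfolding om_def b_def by auto
    have Q: "x \<bullet> (V (Suc t) *v x) = x \<bullet> (V t *v x)
        + om * (\<Sum>i=1..?d-1. x \<bullet> (Pmat (c t) a (v t i) *v x))" for x
      using step unfolding om_def a_def
      by (simp add: matrix_vector_mult_add_rdistrib mv_scaleR mv_sum inner_add_right inner_sum_right)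
    have nv: "norm (v t i) = 1" if "i \<in> {1..?d}" for i
      using es_on[OF es that that] by (simp add: norm_eq_sqrt_inner)
    have sl: "(\<Sum>i=1..?d. f i) = (\<Sum>i=1..?d-1. f i) + f ?d" for f :: "nat \<Rightarrow> real"
      using d1 by (cases ?d) auto
    define \<delta> where "\<delta> = 2 * om / (sqrt a + 1)^2"
    define m where "m = min (a + \<delta>) b"
    have Qlow: "x \<bullet> (V (Suc t) *v x) \<ge> m" if xx: "x \<bullet> x = 1" for x
    proof -
      define s where "s i = (v t i \<bullet> x)^2" for i
      have s0: "s i \<ge> 0" for i unfolding s_def by simp
      have Qt: "x \<bullet> (V t *v x) = (\<Sum>i=1..?d. lam t i * s i)"
        unfolding es_quad[OF es] s_def by (simp add: power2_eq_square mult.assoc)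
      have P: "om * (\<Sum>i=1..?d-1. x \<bullet> (Pmat (c t) a (v t i) *v x)) \<ge> (\<Sum>i=1..?d-1. \<delta> * s i)"
      proof -
        have "(\<Sum>i=1..?d-1. 2 * s i / (sqrt a + 1)^2) \<le> (\<Sum>i=1..?d-1. x \<bullet> (Pmat (c t) a (v t i) *v x))"
        proof (rule sum_mono)
          fix i assume "i \<in> {1..?d-1}"
          then have "i \<in> {1..?d}" by auto
          then show "2 * s i / (sqrt a + 1)^2 \<le> x \<bullet> (Pmat (c t) a (v t i) *v x)"
            unfolding s_def using Pmat_lower[of "c t" "v t i" a x] unit nv apos by auto
        qed
        then have "om * (\<Sum>i=1..?d-1. 2 * s i / (sqrt a + 1)^2) \<le> om * (\<Sum>i=1..?d-1. x \<bullet> (Pmat (c t) a (v t i) *v x))"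
          using om0 by (rule mult_left_mono)
        moreover have "om * (\<Sum>i=1..?d-1. 2 * s i / (sqrt a + 1)^2) = (\<Sum>i=1..?d-1. \<delta> * s i)"
          unfolding sum_distrib_left \<delta>_def by (rule sum.cong) auto
        ultimately show ?thesis by simp
      qed
      have "(\<Sum>i=1..?d-1. m * s i) \<le> (\<Sum>i=1..?d-1. lam t i * s i + \<delta> * s i)"
      proof (rule sum_mono)
        fix i assume i: "i \<in> {1..?d-1}"
        have "lam t i \<ge> a" unfolding a_def using es_mono[OF es, of 1 i] i by auto
        then have "m \<le> lam t i + \<delta>" unfolding m_def by linarith
        then have "m * s i \<le> (lam t i + \<delta>) * s i" using s0 by (rule mult_right_mono)
        then show "m * s i \<le> lam t i * s i + \<delta> * s i" by (simp add: algebra_simps)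
      qed
      moreover have "m * s ?d \<le> lam t ?d * s ?d" using s0 unfolding m_def b_def[symmetric]
        by (intro mult_right_mono) auto
      ultimately have "(\<Sum>i=1..?d. m * s i) \<le> (\<Sum>i=1..?d. lam t i * s i) + (\<Sum>i=1..?d-1. \<delta> * s i)"
        unfolding sl[of "\<lambda>i. m * s i"] sl[of "\<lambda>i. lam t i * s i"] sum.distrib by linarith
      moreover have "(\<Sum>i=1..?d. m * s i) = m"
        using es_normsq[OF es, of x] xx unfolding s_def by (simp add: sum_distrib_left[symmetric])
      ultimately show ?thesis unfolding Q Qt using P by linarith
    qed
    have Qup: "x \<bullet> (V (Suc t) *v x) \<le> b + 2 * (real ?d - 1) * om" if xx: "x \<bullet> x = 1" for x
    proof -
      have Qt: "x \<bullet> (V t *v x) \<le> b" using es_bounds(2)[OF es, of x] xx unfolding b_def by simp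
      have "(\<Sum>i=1..?d-1. x \<bullet> (Pmat (c t) a (v t i) *v x)) \<le> (\<Sum>i=1..?d-1. 2)"
        by (rule sum_mono) (metis Pmat_upper xx mult.right_neutral)
      also have "\<dots> = 2 * (real ?d - 1)" using d1 by (simp add: of_nat_diff)
      finally have "om * (\<Sum>i=1..?d-1. x \<bullet> (Pmat (c t) a (v t i) *v x)) \<le> om * (2 * (real ?d - 1))"
        using om0 by (rule mult_left_mono)
      then show ?thesis unfolding Q using Qt by (simp add: algebra_simps)
    qed
    have ev: "x \<bullet> (V (Suc t) *v x) = lam (Suc t) i" if i: "i \<in> {1..?d}" and x: "x = v (Suc t) i" for i x
      using es_ev[OF es' i] es_on[OF es' i i] x by simp
    have i1: "1 \<in> {1..?d}" and id: "?d \<in> {1..?d}" using d1 by auto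
    have a': "lam (Suc t) 1 \<ge> min (a + 2 * om / (sqrt a + 1)^2) b"
      using Qlow[of "v (Suc t) 1"] ev[OF i1 refl] es_on[OF es' i1 i1] unfolding m_def \<delta>_def by simp
    have b': "lam (Suc t) ?d \<le> b + 2 * (real ?d - 1) * om"
      using Qup[of "v (Suc t) ?d"] ev[OF id refl] es_on[OF es' id id] by simp
    show ?case
      using arith_step[OF a0 lam0_2 ba ak om0 omC Cpos kp kd dr lb a' b'] .
  qed
  show ?thesis
  proof
    fix t
    have es: "sorted_eigensystem (V t) (lam t) (v t)" using eig by blast
    have l: "lam t 1 \<ge> 0" using inv[of t] lam0_2 by linarith
    have "sqrt (k * lam t ?d) \<le> sqrt ((lam t 1)^2)" using inv[of t] by (simp only: real_sqrt_le_mono)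
    also have "\<dots> = lam t 1" using l by simp
    finally show "lambda_min (V t) \<ge> sqrt (2 / (3 * (real CARD('n) - 1)) * lambda_max (V t))"
      unfolding es_lmin[OF es] es_lmax[OF es] k_def[symmetric] .
  qed
qed

end
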